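(* Let $P\subseteq\mathbb{P}^{n-1}$ be a full-dimensional polytope. Then its slicing set is \[P^{[n-1]}=\{V\in\mathrm{Gr}(n-1,n)\mid \overline{\mathrm{var}}(\mathrm{C}_P^{n-1}(V))\ge1\}.\]
   Context: Work over $\mathbb{R}$. $\mathrm{Gr}(n-1,n)$ is the set of hyperplanes (codimension-one linear subspaces) of $\mathbb{R}^n$, identified with their images in $\mathbb{P}^{n-1}$. A polytope $P\subseteq\mathbb{P}^{n-1}$ is the image in $\mathbb{P}^{n-1}$ of a cone $\{\sum c_iv_i:c_i\ge0\}$ over finitely many $v_i\in\mathbb{R}^n$; full-dimensional means the underlying polytope has dimension $n-1$. $P^{[n-1]}=\{V\in\mathrm{Gr}(n-1,n)\mid V\cap P\neq\emptyset\}$. Fix an ordering $w_1,\ldots,w_f$ of the vertices of $P$ and a representative vector in $\mathbb{R}^n$ for each. For $V=\ker(a)$ with $a=(a_1,\ldots,a_n)$ a nonzero row vector, the Chow form of the vertex $w_j$ is $C_{w_j}(V)=\sum_{i=1}^n (w_j)_i a_i$, and $\mathrm{C}_P^{n-1}(V)=(C_{w_1}(V),\ldots,C_{w_f}(V))$, defined up to a common nonzero scalar. For a real vector $x$, $\overline{\mathrm{var}}(x)$ is the maximal number of sign changes in the sequence obtained from $x$ by replacing each zero entry by $+$ or $-$ in any way. *)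

theory Defs
  imports "HOL-Analysis.Analysis"
begin

definition gen_cone :: "(real^'n) list \<Rightarrow> (real^'n) set" where
  "gen_cone vs = {(\<Sum>i<length vs. c i *\<^sub>R (vs ! i)) | c. \<forall>i. c i \<ge> 0}"

text \<open>The cone is pointed (so that its image in projective space is a polytope)
  and full-dimensional (so that the polytope has dimension n-1).\<close>
definition pointed_cone :: "(real^'n) set \<Rightarrow> bool" where
  "pointed_cone C \<longleftrightarrow> (\<forall>x. x \<in> C \<and> - x \<in> C \<longrightarrow> x = 0)"

definition full_dim_polytope :: "(real^'n) list \<Rightarrow> bool" where
  "full_dim_polytope vs \<longleftrightarrow> pointed_cone (gen_cone vs) \<and> span (set vs) = UNIV"

text \<open>w is a representative (in the cone) of a vertex of P, i.e. spans an extreme ray.\<close>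
definition extreme_ray_gen :: "(real^'n) set \<Rightarrow> real^'n \<Rightarrow> bool" where
  "extreme_ray_gen C w \<longleftrightarrow> w \<in> C \<and> w \<noteq> 0 \<and>
     (\<forall>x y. x \<in> C \<and> y \<in> C \<and> w = x + y \<longrightarrow> (\<exists>t\<ge>0. x = t *\<^sub>R w))"

definition vertex_ordering :: "(real^'n) list \<Rightarrow> (real^'n) list \<Rightarrow> bool" where
  "vertex_ordering vs ws \<longleftrightarrow>
     (\<forall>j<length ws. extreme_ray_gen (gen_cone vs) (ws ! j)) \<and>
     (\<forall>j<length ws. \<forall>k<length ws. j \<noteq> k \<longrightarrow> \<not> (\<exists>t>0. ws ! j = t *\<^sub>R ws ! k)) \<and>
     (\<forall>w. extreme_ray_gen (gen_cone vs) w \<longrightarrow> (\<exists>j<length ws. \<exists>t>0. w = t *\<^sub>R ws ! j))"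

text \<open>Chow form vector for V = ker a.\<close>
definition chow_vec :: "(real^'n) list \<Rightarrow> real^'n \<Rightarrow> real list" where
  "chow_vec ws a = map (\<lambda>w. \<Sum>i\<in>UNIV. (w $ i) * (a $ i)) ws"

definition sign_changes :: "real list \<Rightarrow> nat" where
  "sign_changes ys = card {i. Suc i < length ys \<and> ys ! i * ys ! (Suc i) < 0}"

definition var_bar :: "real list \<Rightarrow> nat" where
  "var_bar xs = Max {sign_changes ys | ys. length ys = length xs \<and>
      (\<forall>i<length xs. ys ! i \<in> {-1, 1} \<and> (xs ! i \<noteq> 0 \<longrightarrow> ys ! i = sgn (xs ! i)))}"

text \<open>Slicing set: hyperplanes ker a (a \<noteq> 0) meeting P, i.e. containing a nonzero point of the cone.\<close>
definition slicing_set :: "(real^'n) list \<Rightarrow> (real^'n) set" where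
  "slicing_set vs = {a. a \<noteq> 0 \<and> (\<exists>x\<in>gen_cone vs. x \<noteq> 0 \<and> a \<bullet> x = 0)}"

end

theory Submission
  imports Defs
begin

definition coneI :: "(nat \<Rightarrow> 'a::real_vector) \<Rightarrow> nat set \<Rightarrow> 'a set" where
  "coneI f I = {(\<Sum>i\<in>I. c i *\<^sub>R f i) | c. \<forall>i\<in>I. c i \<ge> 0}"

lemma coneI_sub:
  assumes add: "\<And>x y. x\<in>C \<Longrightarrow> y\<in>C \<Longrightarrow> x+y\<in>C" and z: "0\<in>C"
    and sc: "\<And>x t. x\<in>C \<Longrightarrow> t\<ge>0 \<Longrightarrow> t*\<^sub>R x \<in> C"
    and fin: "finite I" and f: "\<And>i. i\<in>I \<Longrightarrow> f i \<in> C"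
  shows "coneI f I \<subseteq> C"
proof
  fix x assume "x \<in> coneI f I"
  then obtain c where x: "x = (\<Sum>i\<in>I. c i *\<^sub>R f i)" and c: "\<forall>i\<in>I. c i \<ge> 0"
    by (auto simp: coneI_def)
  have "(\<Sum>i\<in>I. c i *\<^sub>R f i) \<in> C" using fin f c
  proof (induction I rule: finite_induct)
    case empty then show ?case using z by simp
  next
    case (insert i I) then show ?case using add sc by simp
  qed
  with x show "x \<in> C" by simp
qed

lemma aux: fixes F p q :: "'a::real_vector"
  assumes "F = a *\<^sub>R F + p + (b *\<^sub>R F + q)" shows "(1 - (a+b)) *\<^sub>R F = p + q"
proof -
  have "F - (a *\<^sub>R F + b *\<^sub>R F) = (a *\<^sub>R F + p + (b *\<^sub>R F + q)) - (a *\<^sub>R F + b *\<^sub>R F)"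
    using assms by (rule arg_cong)
  also have "\<dots> = p + q" by simp
  finally show ?thesis by (simp add: algebra_simps)
qed
lemma aux2: fixes F p q :: "'a::real_vector"
  assumes "(1 - c) *\<^sub>R F = p + q" shows "(c - 1) *\<^sub>R F + (p + q) = 0"
proof -
  have "(c - 1) *\<^sub>R F + (p + q) = (c - 1) *\<^sub>R F + (1 - c) *\<^sub>R F" by (simp only: assms)
  also have "\<dots> = 0" by (simp add: algebra_simps)
  finally show ?thesis .
qed

lemma mink:
  fixes C :: "(real^'n) set"
  assumes add: "\<And>x y. x\<in>C \<Longrightarrow> y\<in>C \<Longrightarrow> x+y\<in>C" and z: "0\<in>C"
    and sc: "\<And>x t. x\<in>C \<Longrightarrow> t\<ge>0 \<Longrightarrow> t*\<^sub>R x \<in> C"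
    and pt: "\<And>x. x\<in>C \<Longrightarrow> -x\<in>C \<Longrightarrow> x = 0"
    and fin: "finite I" and fI: "\<forall>i\<in>I. f i \<in> C" and cov: "C \<subseteq> coneI f I"
  shows "\<exists>J\<subseteq>I. finite J \<and> (\<forall>j\<in>J. f j = 0 \<or> extreme_ray_gen C (f j)) \<and> C \<subseteq> coneI f J"
  using fin fI cov
proof (induction I rule: finite_psubset_induct)
  case (psubset I)
  show ?case
  proof (cases "\<forall>j\<in>I. f j = 0 \<or> extreme_ray_gen C (f j)")
    case True then show ?thesis using psubset by blast
  next
    case False
    then obtain i where iI: "i\<in>I" and nz: "f i \<noteq> 0" and ne: "\<not> extreme_ray_gen C (f i)" by blast
    have fiC: "f i \<in> C" using psubset.prems iI by blast
    from ne fiC nz obtain x y where xC: "x\<in>C" and yC: "y\<in>C" and xy: "f i = x + y"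
      and nt: "\<And>t. t \<ge> 0 \<Longrightarrow> x \<noteq> t *\<^sub>R f i"
      unfolding extreme_ray_gen_def by blast
    obtain a where a: "\<forall>u\<in>I. a u \<ge> 0" "x = (\<Sum>u\<in>I. a u *\<^sub>R f u)"
      using xC psubset.prems(2) unfolding coneI_def by blast
    obtain b where b: "\<forall>u\<in>I. b u \<ge> 0" "y = (\<Sum>u\<in>I. b u *\<^sub>R f u)"
      using yC psubset.prems(2) unfolding coneI_def by blast
    define I' where "I' = I - {i}"
    have fin': "finite I'" using psubset.hyps by (simp add: I'_def)
    have split: "\<And>d. (\<Sum>u\<in>I. d u *\<^sub>R f u) = d i *\<^sub>R f i + (\<Sum>u\<in>I'. d u *\<^sub>R f u)"
      using iI psubset.hyps by (simp add: I'_def sum.remove)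
    define p where "p = (\<Sum>u\<in>I'. a u *\<^sub>R f u)"
    define q where "q = (\<Sum>u\<in>I'. b u *\<^sub>R f u)"
    have sub': "coneI f I' \<subseteq> C"
      by (rule coneI_sub[OF add z sc fin']) (use psubset.prems in \<open>auto simp: I'_def\<close>)
    have pC: "p \<in> C" using sub' a(1) unfolding p_def coneI_def I'_def by blast
    have qC: "q \<in> C" using sub' b(1) unfolding q_def coneI_def I'_def by blast
    have hx: "x = a i *\<^sub>R f i + p" using a(2) split[of a] by (simp add: p_def)
    have hy: "y = b i *\<^sub>R f i + q" using b(2) split[of b] by (simp add: q_def)
    have eq0: "f i = a i *\<^sub>R f i + p + (b i *\<^sub>R f i + q)"
      unfolding hx[symmetric] hy[symmetric] by (rule xy)
    have eq: "(1 - (a i + b i)) *\<^sub>R f i = p + q" by (rule aux[OF eq0])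
    have fi_in: "f i \<in> coneI f I'"
    proof (cases "a i + b i < 1")
      case True
      define k where "k = 1 / (1 - (a i + b i))"
      have k0: "k \<ge> 0" using True by (simp add: k_def)
      have "f i = k *\<^sub>R ((1 - (a i + b i)) *\<^sub>R f i)" using True by (simp add: k_def)
      hence "f i = k *\<^sub>R (p + q)" by (simp only: eq)
      also have "\<dots> = (\<Sum>u\<in>I'. (k * (a u + b u)) *\<^sub>R f u)"
        by (simp add: p_def q_def scaleR_add_right scaleR_sum_right sum.distrib[symmetric] scaleR_add_left algebra_simps)
      finally have "f i = (\<Sum>u\<in>I'. (k * (a u + b u)) *\<^sub>R f u)" .
      moreover have "\<forall>u\<in>I'. k * (a u + b u) \<ge> 0" using k0 a(1) b(1) by (auto simp: I'_def)
      ultimately show ?thesis unfolding coneI_def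
        by (intro CollectI exI[where x="\<lambda>u. k * (a u + b u)"] conjI) assumption+
    next
      case False
      have e0: "(a i + b i - 1) *\<^sub>R f i + (p+q) = 0" by (rule aux2[OF eq])
      have cf: "(a i + b i - 1) *\<^sub>R f i \<in> C" using sc fiC False by simp
      have "p + q \<in> C" using add pC qC by blast
      moreover have "- (p + q) = (a i + b i - 1) *\<^sub>R f i"
        by (rule minus_unique) (subst add.commute, rule e0)
      ultimately have "p + q = 0" using pt cf by metis
      hence "q = -p" by (simp add: add_eq_0_iff)
      hence "-p \<in> C" using qC by simp
      hence "p = 0" using pt pC by blast
      hence "x = a i *\<^sub>R f i" using a(2) split[of a] by (simp add: p_def)
      with nt a(1) iI show ?thesis by blast
    qed
    then obtain e where e: "\<forall>u\<in>I'. e u \<ge> 0" "f i = (\<Sum>u\<in>I'. e u *\<^sub>R f u)"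
      unfolding coneI_def by blast
    have cov': "C \<subseteq> coneI f I'"
    proof
      fix w assume "w \<in> C"
      then obtain d where d: "\<forall>u\<in>I. d u \<ge> 0" "w = (\<Sum>u\<in>I. d u *\<^sub>R f u)"
        using psubset.prems(2) unfolding coneI_def by blast
      have "w = d i *\<^sub>R f i + (\<Sum>u\<in>I'. d u *\<^sub>R f u)" using d(2) split by simp
      also have "\<dots> = (\<Sum>u\<in>I'. (d i * e u + d u) *\<^sub>R f u)"
        by (subst e(2)) (simp add: scaleR_sum_right scaleR_add_left sum.distrib)
      finally have "w = (\<Sum>u\<in>I'. (d i * e u + d u) *\<^sub>R f u)" .
      moreover have "\<forall>u\<in>I'. d i * e u + d u \<ge> 0" using d(1) e(1) iI by (auto simp: I'_def)
      ultimately show "w \<in> coneI f I'" unfolding coneI_def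
        by (intro CollectI exI[where x="\<lambda>u. d i * e u + d u"] conjI) assumption+
    qed
    have ps: "I' \<subset> I" using iI by (auto simp: I'_def)
    have fI': "\<forall>u\<in>I'. f u \<in> C" using psubset.prems(1) by (auto simp: I'_def)
    have ex: "\<exists>J\<subseteq>I'. finite J \<and> (\<forall>j\<in>J. f j = 0 \<or> extreme_ray_gen C (f j)) \<and> C \<subseteq> coneI f J"
      by (rule psubset.IH[OF ps fI' cov'])
    then obtain J where J1: "J \<subseteq> I'"
      and J2: "finite J \<and> (\<forall>j\<in>J. f j = 0 \<or> extreme_ray_gen C (f j)) \<and> C \<subseteq> coneI f J"
      by (elim exE conjE) (intro that, assumption, intro conjI, assumption+)
    have "J \<subseteq> I" using J1 ps by blast
    then show ?thesis using J2 by (intro exI[where x=J] conjI) simp_all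
  qed
qed

lemma step_change:
  fixes g :: "nat \<Rightarrow> real"
  assumes "j < k" "g j \<noteq> g k"
  shows "\<exists>i. j \<le> i \<and> i < k \<and> g i \<noteq> g (Suc i)"
  using assms
proof (induction k)
  case 0 then show ?case by simp
next
  case (Suc k)
  show ?case
  proof (cases "j < k")
    case True
    show ?thesis
    proof (cases "g j = g k")
      case True
      then have "g k \<noteq> g (Suc k)" using Suc.prems by simp
      then show ?thesis using \<open>j < k\<close> by (intro exI[where x=k]) simp
    next
      case False
      then obtain i where "j \<le> i" "i < k" "g i \<noteq> g (Suc i)" using Suc.IH \<open>j < k\<close> by blast
      then show ?thesis by (intro exI[where x=i]) simp
    qed
  next
    case False
    then have "j = k" using Suc.prems by simp
    then show ?thesis using Suc.prems by (intro exI[where x=k]) simp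
  qed
qed

lemma finite_Y:
  "finite {sign_changes ys | ys. length ys = length xs \<and>
      (\<forall>i<length xs. ys ! i \<in> {-1, 1} \<and> (xs ! i \<noteq> 0 \<longrightarrow> ys ! i = sgn (xs ! i)))}"
proof -
  have "{sign_changes ys | ys. length ys = length xs \<and>
      (\<forall>i<length xs. ys ! i \<in> {-1, 1} \<and> (xs ! i \<noteq> 0 \<longrightarrow> ys ! i = sgn (xs ! i)))}
    \<subseteq> sign_changes ` {ys. set ys \<subseteq> {-1,1} \<and> length ys = length xs}"
  proof (rule subsetI)
    fix z assume "z \<in> {sign_changes ys | ys. length ys = length xs \<and>
      (\<forall>i<length xs. ys ! i \<in> {-1, 1} \<and> (xs ! i \<noteq> 0 \<longrightarrow> ys ! i = sgn (xs ! i)))}"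
    then obtain ys where z: "z = sign_changes ys" and l: "length ys = length xs"
      and h: "\<forall>i<length xs. ys ! i \<in> {-1, 1}" by blast
    have "set ys \<subseteq> {-1,1}" using l h by (auto simp: in_set_conv_nth)
    then show "z \<in> sign_changes ` {ys. set ys \<subseteq> {-1,1} \<and> length ys = length xs}"
      using z l by blast
  qed
  moreover have "finite {ys. set ys \<subseteq> {-1,1::real} \<and> length ys = length xs}"
    by (rule finite_lists_length_eq) simp
  ultimately show ?thesis by (meson finite_imageI finite_subset)
qed

lemma vb_ge1:
  fixes xs :: "real list"
  assumes j: "j < length xs" and k: "k < length xs" and jk: "j \<noteq> k"
    and xj: "xs!j \<le> 0" and xk: "xs!k \<ge> 0"
  shows "var_bar xs \<ge> 1"
proof -
  define ys where "ys = map (\<lambda>i. if i = j then -1 else if i = k then 1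
      else if xs!i > 0 then 1 else (-1::real)) [0..<length xs]"
  have len: "length ys = length xs" by (simp add: ys_def)
  have ysi: "\<And>i. i < length xs \<Longrightarrow> ys ! i = (if i = j then -1 else if i = k then 1
      else if xs!i > 0 then 1 else (-1::real))" by (simp add: ys_def)
  have pm: "\<And>i. i < length xs \<Longrightarrow> ys ! i \<in> {-1, 1}" using ysi by simp
  have sg: "\<And>i. i < length xs \<Longrightarrow> xs ! i \<noteq> 0 \<Longrightarrow> ys ! i = sgn (xs ! i)"
    using ysi xj xk jk by (auto simp: sgn_if)
  have mem: "sign_changes ys \<in> {sign_changes ys | ys. length ys = length xs \<and>
      (\<forall>i<length xs. ys ! i \<in> {-1, 1} \<and> (xs ! i \<noteq> 0 \<longrightarrow> ys ! i = sgn (xs ! i)))}"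
    using len pm sg by blast
  have diff: "ys ! j \<noteq> ys ! k" using ysi j k jk by simp
  obtain i where i: "min j k \<le> i" "i < max j k" "ys ! i \<noteq> ys ! (Suc i)"
  proof (cases "j < k")
    case True
    then show ?thesis using step_change[of j k "\<lambda>i. ys ! i"] diff that by auto
  next
    case False
    then have "k < j" using jk by simp
    then show ?thesis using step_change[of k j "\<lambda>i. ys ! i"] diff that by auto
  qed
  have si: "Suc i < length xs" using i j k by simp
  have "ys ! i * ys ! (Suc i) < 0" using pm[of i] pm[of "Suc i"] si i(3) by auto
  then have "i \<in> {i. Suc i < length ys \<and> ys ! i * ys ! (Suc i) < 0}" using si len by simp
  moreover have "finite {i. Suc i < length ys \<and> ys ! i * ys ! (Suc i) < 0}"
    by (rule finite_subset[of _ "{..<length ys}"]) auto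
  ultimately have "sign_changes ys \<ge> 1" unfolding sign_changes_def
    by (metis (no_types, lifting) One_nat_def Suc_leI card_gt_0_iff empty_iff)
  also have "sign_changes ys \<le> var_bar xs" unfolding var_bar_def
    by (rule Max_ge[OF finite_Y mem])
  finally show ?thesis .
qed

lemma vb_ge1_rev:
  fixes xs :: "real list"
  assumes "var_bar xs \<ge> 1"
  shows "\<exists>j k. j < length xs \<and> k < length xs \<and> j \<noteq> k \<and> xs!j \<le> 0 \<and> xs!k \<ge> 0"
proof -
  define Y where "Y = {sign_changes ys | ys. length ys = length xs \<and>
      (\<forall>i<length xs. ys ! i \<in> {-1, 1} \<and> (xs ! i \<noteq> 0 \<longrightarrow> ys ! i = sgn (xs ! i)))}"
  define ys0 where "ys0 = map (\<lambda>x. if x > 0 then 1 else (-1::real)) xs"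
  have "sign_changes ys0 \<in> Y" unfolding Y_def ys0_def by (auto simp: sgn_if)
  then have ne: "Y \<noteq> {}" by blast
  have "Max Y \<in> Y" using Max_in[OF finite_Y[of xs, folded Y_def] ne] .
  then obtain ys where len: "length ys = length xs"
    and pm: "\<forall>i<length xs. ys ! i \<in> {-1, 1} \<and> (xs ! i \<noteq> 0 \<longrightarrow> ys ! i = sgn (xs ! i))"
    and mx: "Max Y = sign_changes ys" unfolding Y_def by blast
  have "sign_changes ys \<ge> 1" using assms mx unfolding var_bar_def Y_def by simp
  then have "{i. Suc i < length ys \<and> ys ! i * ys ! (Suc i) < 0} \<noteq> {}"
    unfolding sign_changes_def by (metis card.empty not_one_le_zero)
  then obtain i where si: "Suc i < length xs" and neg: "ys ! i * ys ! (Suc i) < 0" using len by auto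
  have a: "ys ! i \<in> {-1,1}" "ys ! Suc i \<in> {-1,1}" using pm si by auto
  have b: "xs ! i \<noteq> 0 \<Longrightarrow> ys ! i = sgn (xs ! i)" "xs ! Suc i \<noteq> 0 \<Longrightarrow> ys ! Suc i = sgn (xs ! Suc i)"
    using pm si by auto
  show ?thesis
  proof (cases "ys ! i = -1")
    case True
    then have "ys ! Suc i = 1" using a neg by auto
    have "xs ! i \<le> 0" using True b(1) by (cases "xs ! i > 0") auto
    moreover have "xs ! Suc i \<ge> 0" using \<open>ys ! Suc i = 1\<close> b(2) by (cases "xs ! Suc i < 0") auto
    ultimately show ?thesis using si by (intro exI[where x=i] exI[where x="Suc i"]) simp
  next
    case False
    then have "ys ! i = 1" "ys ! Suc i = -1" using a neg by auto
    then have "xs ! i \<ge> 0" "xs ! Suc i \<le> 0" using b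
      by ((cases "xs ! i < 0"; cases "xs ! Suc i > 0"); auto)+
    then show ?thesis using si by (intro exI[where x="Suc i"] exI[where x=i]) simp
  qed
qed

theorem corollary5p3:
  fixes vs ws :: "(real^'n) list"
  assumes "full_dim_polytope vs"
    and "vertex_ordering vs ws"
  shows "slicing_set vs = {a. a \<noteq> 0 \<and> var_bar (chow_vec ws a) \<ge> 1}"
proof -
  define C where "C = gen_cone vs"
  define f where "f = (\<lambda>i. vs ! i)"
  have Cadd: "\<And>x y. x\<in>C \<Longrightarrow> y\<in>C \<Longrightarrow> x+y\<in>C"
  proof -
    fix x y assume "x \<in> C" "y \<in> C"
    then obtain c1 c2 where x: "x = (\<Sum>i<length vs. c1 i *\<^sub>R (vs ! i))" "\<forall>i. c1 i \<ge> 0"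
      and y: "y = (\<Sum>i<length vs. c2 i *\<^sub>R (vs ! i))" "\<forall>i. c2 i \<ge> 0"
      unfolding C_def gen_cone_def by blast
    have "x + y = (\<Sum>i<length vs. (c1 i + c2 i) *\<^sub>R (vs ! i))"
      using x(1) y(1) by (simp add: scaleR_add_left sum.distrib)
    moreover have "\<forall>i. c1 i + c2 i \<ge> 0" using x(2) y(2) by (simp add: add_nonneg_nonneg)
    ultimately show "x + y \<in> C" unfolding C_def gen_cone_def
      by (intro CollectI exI[where x="\<lambda>i. c1 i + c2 i"] conjI) assumption+
  qed
  have Csc: "\<And>x t. x\<in>C \<Longrightarrow> t\<ge>0 \<Longrightarrow> t*\<^sub>R x \<in> C"
  proof -
    fix x and t :: real assume "x \<in> C" "t \<ge> 0"
    then obtain c1 where x: "x = (\<Sum>i<length vs. c1 i *\<^sub>R (vs ! i))" "\<forall>i. c1 i \<ge> 0"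
      unfolding C_def gen_cone_def by blast
    have "t *\<^sub>R x = (\<Sum>i<length vs. (t * c1 i) *\<^sub>R (vs ! i))"
      using x(1) by (simp add: scaleR_sum_right)
    moreover have "\<forall>i. t * c1 i \<ge> 0" using x(2) \<open>t \<ge> 0\<close> by simp
    ultimately show "t *\<^sub>R x \<in> C" unfolding C_def gen_cone_def
      by (intro CollectI exI[where x="\<lambda>i. t * c1 i"] conjI) assumption+
  qed
  have C0: "0 \<in> C"
  proof -
    have "(0::real^'n) = (\<Sum>i<length vs. (\<lambda>i. 0::real) i *\<^sub>R (vs ! i))" by simp
    moreover have "\<forall>i. (\<lambda>i. 0::real) i \<ge> 0" by simp
    ultimately show ?thesis unfolding C_def gen_cone_def
      by (intro CollectI exI[where x="\<lambda>i. 0::real"] conjI) assumption+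
  qed
  have Cpt: "\<And>x. x\<in>C \<Longrightarrow> -x\<in>C \<Longrightarrow> x = 0"
    using assms(1) unfolding full_dim_polytope_def pointed_cone_def C_def by blast
  have Cgen: "\<And>i. i < length vs \<Longrightarrow> vs ! i \<in> C"
  proof -
    fix i assume i: "i < length vs"
    have "vs ! i = (\<Sum>j<length vs. (\<lambda>j. if j = i then 1 else 0::real) j *\<^sub>R (vs ! j))"
    proof -
      have "(\<Sum>j<length vs. (\<lambda>j. if j = i then 1 else 0::real) j *\<^sub>R (vs ! j))
          = (\<Sum>j<length vs. if j = i then vs ! j else 0)" by (rule sum.cong) auto
      also have "\<dots> = vs ! i" using i by simp
      finally show ?thesis by simp
    qed
    moreover have "\<forall>j. (\<lambda>j. if j = i then 1 else 0::real) j \<ge> 0" by simp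
    ultimately show "vs ! i \<in> C" unfolding C_def gen_cone_def
      by (intro CollectI exI[where x="\<lambda>j. if j = i then 1 else 0::real"] conjI) assumption+
  qed
  have Ccov: "C \<subseteq> coneI f {..<length vs}"
    unfolding C_def gen_cone_def coneI_def f_def by blast
  obtain J where Jfin: "finite J" and Jext: "\<forall>j\<in>J. f j = 0 \<or> extreme_ray_gen C (f j)"
    and Jcov: "C \<subseteq> coneI f J"
    using mink[OF Cadd C0 Csc Cpt, of "{..<length vs}" f] Cgen Ccov by (auto simp: f_def)
  have VO: "\<And>w. extreme_ray_gen C w \<Longrightarrow> \<exists>m<length ws. \<exists>t>0. w = t *\<^sub>R ws ! m"
    using assms(2) unfolding vertex_ordering_def C_def by blast
  have ray: "\<forall>j\<in>J. f j = 0 \<or> (\<exists>m<length ws. \<exists>t>0. f j = t *\<^sub>R ws ! m)"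
    using Jext VO by blast
  have wsC: "\<And>m. m < length ws \<Longrightarrow> ws ! m \<in> C \<and> ws ! m \<noteq> 0"
    using assms(2) unfolding vertex_ordering_def extreme_ray_gen_def C_def by blast
  have chow_len: "\<And>a. length (chow_vec ws a) = length ws" by (simp add: chow_vec_def)
  have chow_nth: "\<And>a m. m < length ws \<Longrightarrow> chow_vec ws a ! m = a \<bullet> ws ! m"
    by (simp add: chow_vec_def inner_vec_def mult.commute)
  have repr: "\<And>a x. x \<in> C \<Longrightarrow> \<exists>c. (\<forall>j\<in>J. c j \<ge> 0) \<and> x = (\<Sum>j\<in>J. c j *\<^sub>R f j)
       \<and> a \<bullet> x = (\<Sum>j\<in>J. c j * (a \<bullet> f j))"
  proof -
    fix a x assume "x \<in> C"
    then obtain c where c: "\<forall>j\<in>J. c j \<ge> 0" "x = (\<Sum>j\<in>J. c j *\<^sub>R f j)"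
      using Jcov unfolding coneI_def by blast
    then have "a \<bullet> x = (\<Sum>j\<in>J. c j * (a \<bullet> f j))" by (simp add: inner_sum_right)
    with c show "\<exists>c. (\<forall>j\<in>J. c j \<ge> 0) \<and> x = (\<Sum>j\<in>J. c j *\<^sub>R f j)
       \<and> a \<bullet> x = (\<Sum>j\<in>J. c j * (a \<bullet> f j))" by blast
  qed
  have posA: "\<And>a x. \<forall>m<length ws. a \<bullet> ws ! m > 0 \<Longrightarrow> x \<in> C \<Longrightarrow> a \<bullet> x = 0 \<Longrightarrow> x = 0"
  proof -
    fix a x assume pos: "\<forall>m<length ws. a \<bullet> ws ! m > 0" and xC: "x \<in> C" and ax: "a \<bullet> x = 0"
    obtain c where c: "\<forall>j\<in>J. c j \<ge> 0" "x = (\<Sum>j\<in>J. c j *\<^sub>R f j)"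
       "a \<bullet> x = (\<Sum>j\<in>J. c j * (a \<bullet> f j))" using repr[OF xC] by blast
    have fpos: "\<And>j. j \<in> J \<Longrightarrow> f j \<noteq> 0 \<Longrightarrow> a \<bullet> f j > 0"
    proof -
      fix j assume "j \<in> J" "f j \<noteq> 0"
      then obtain m t where "m < length ws" "t > 0" "f j = t *\<^sub>R ws ! m" using ray by blast
      then show "a \<bullet> f j > 0" using pos by simp
    qed
    have nn: "\<forall>j\<in>J. c j * (a \<bullet> f j) \<ge> 0"
    proof
      fix j assume "j \<in> J"
      then show "c j * (a \<bullet> f j) \<ge> 0" using c(1) fpos[of j]
        by (cases "f j = 0") (auto intro: mult_nonneg_nonneg less_imp_le)
    qed
    have s0: "(\<Sum>j\<in>J. c j * (a \<bullet> f j)) = 0" using c(3) ax by simp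
    have "\<forall>j\<in>J. c j * (a \<bullet> f j) = 0"
      using sum_nonneg_eq_0_iff[OF Jfin, of "\<lambda>j. c j * (a \<bullet> f j)"] nn s0 by blast
    then have "\<forall>j\<in>J. c j *\<^sub>R f j = 0" using fpos by fastforce
    then have "(\<Sum>j\<in>J. c j *\<^sub>R f j) = 0" by (rule sum.neutral)
    then show "x = 0" using c(2) by simp
  qed
  have zeroA: "\<And>a x. \<forall>m<length ws. a \<bullet> ws ! m = 0 \<Longrightarrow> x \<in> C \<Longrightarrow> a \<bullet> x = 0"
  proof -
    fix a x assume z: "\<forall>m<length ws. a \<bullet> ws ! m = 0" and xC: "x \<in> C"
    obtain c where c: "a \<bullet> x = (\<Sum>j\<in>J. c j * (a \<bullet> f j))" using repr[OF xC] by blast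
    have "\<forall>j\<in>J. a \<bullet> f j = 0"
    proof
      fix j assume "j \<in> J"
      then show "a \<bullet> f j = 0" using ray z by fastforce
    qed
    then show "a \<bullet> x = 0" using c by simp
  qed
  have L: "\<And>a. a \<in> slicing_set vs \<Longrightarrow> var_bar (chow_vec ws a) \<ge> 1"
  proof -
    fix a assume "a \<in> slicing_set vs"
    then obtain x where a0: "a \<noteq> 0" and xC: "x \<in> C" and x0: "x \<noteq> 0" and ax: "a \<bullet> x = 0"
      unfolding slicing_set_def C_def by blast
    have n1: "\<not> (\<forall>m<length ws. a \<bullet> ws ! m > 0)" using posA xC ax x0 by blast
    have n2: "\<not> (\<forall>m<length ws. a \<bullet> ws ! m < 0)"
    proof
      assume "\<forall>m<length ws. a \<bullet> ws ! m < 0"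
      then have "\<forall>m<length ws. (-a) \<bullet> ws ! m > 0" by simp
      then show False using posA[OF _ xC, of "-a"] ax x0 by simp
    qed
    obtain m1 where m1: "m1 < length ws" "a \<bullet> ws ! m1 \<le> 0" using n1 by force
    obtain m2 where m2: "m2 < length ws" "a \<bullet> ws ! m2 \<ge> 0" using n2 by force
    have "\<exists>j k. j < length ws \<and> k < length ws \<and> j \<noteq> k \<and> a \<bullet> ws ! j \<le> 0 \<and> a \<bullet> ws ! k \<ge> 0"
    proof (cases "m1 = m2")
      case False then show ?thesis using m1 m2 by blast
    next
      case True
      then have z1: "a \<bullet> ws ! m1 = 0" using m1 m2 by simp
      show ?thesis
      proof (cases "\<exists>k<length ws. k \<noteq> m1")
        case True
        then obtain k where k: "k < length ws" "k \<noteq> m1" by blast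
        show ?thesis
        proof (cases "a \<bullet> ws ! k \<ge> 0")
          case True then show ?thesis using k m1 z1 by blast
        next
          case False then show ?thesis using k m1 z1
            by (intro exI[where x=k] exI[where x=m1]) simp
        qed
      next
        case False
        then have "\<forall>m<length ws. a \<bullet> ws ! m = 0" using z1 by auto
        then have Cz: "\<And>y. y \<in> C \<Longrightarrow> a \<bullet> y = 0" using zeroA by blast
        have "set vs \<subseteq> {y. a \<bullet> y = 0}" using Cz Cgen by (auto simp: in_set_conv_nth)
        then have "span (set vs) \<subseteq> {y. a \<bullet> y = 0}"
          by (rule span_minimal) (rule subspace_hyperplane)
        moreover have "span (set vs) = UNIV" using assms(1) unfolding full_dim_polytope_def by blast
        ultimately have "a \<bullet> a = 0" by blast
        then show ?thesis using a0 by simp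
      qed
    qed
    then obtain j k where jk: "j < length ws" "k < length ws" "j \<noteq> k" "a \<bullet> ws ! j \<le> 0" "a \<bullet> ws ! k \<ge> 0"
      by blast
    show "var_bar (chow_vec ws a) \<ge> 1"
      by (rule vb_ge1[of j _ k]) (use jk chow_len chow_nth in auto)
  qed
  have R: "\<And>a. a \<noteq> 0 \<Longrightarrow> var_bar (chow_vec ws a) \<ge> 1 \<Longrightarrow> a \<in> slicing_set vs"
  proof -
    fix a :: "real^'n" assume a0: "a \<noteq> 0" and vb: "var_bar (chow_vec ws a) \<ge> 1"
    obtain j k where jk: "j < length ws" "k < length ws" "j \<noteq> k" "a \<bullet> ws ! j \<le> 0" "a \<bullet> ws ! k \<ge> 0"
      using vb_ge1_rev[OF vb] chow_len chow_nth by metis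
    have wj: "ws ! j \<in> C" "ws ! j \<noteq> 0" using wsC jk by auto
    have wk: "ws ! k \<in> C" "ws ! k \<noteq> 0" using wsC jk by auto
    have "\<exists>x\<in>C. x \<noteq> 0 \<and> a \<bullet> x = 0"
    proof (cases "a \<bullet> ws ! j = 0")
      case True then show ?thesis using wj by blast
    next
      case False
      define \<alpha> where "\<alpha> = a \<bullet> ws ! k"
      define \<beta> where "\<beta> = - (a \<bullet> ws ! j)"
      have al: "\<alpha> \<ge> 0" using jk by (simp add: \<alpha>_def)
      have be: "\<beta> > 0" using jk False by (simp add: \<beta>_def)
      define x where "x = \<alpha> *\<^sub>R ws ! j + \<beta> *\<^sub>R ws ! k"
      have xC: "x \<in> C" unfolding x_def using Cadd Csc wj wk al be by simp
      have ax: "a \<bullet> x = 0" unfolding x_def \<alpha>_def \<beta>_def by (simp add: inner_add_right algebra_simps)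
      have x0: "x \<noteq> 0"
      proof
        assume xz: "x = 0"
        show False
        proof (cases "\<alpha> = 0")
          case True
          then have "\<beta> *\<^sub>R ws ! k = 0" using xz by (simp add: x_def)
          then show False using be wk by simp
        next
          case False
          then have ap: "\<alpha> > 0" using al by simp
          have "(1/\<alpha>) *\<^sub>R x = 0" using xz by simp
          then have "ws ! j + (\<beta>/\<alpha>) *\<^sub>R ws ! k = 0" using ap
            by (simp add: x_def scaleR_add_right)
          then have "- ws ! j = (\<beta>/\<alpha>) *\<^sub>R ws ! k" by (rule minus_unique)
          moreover have "(\<beta>/\<alpha>) *\<^sub>R ws ! k \<in> C" using Csc wk ap be by simp
          ultimately have "ws ! j = 0" using Cpt wj by metis
          then show False using wj by simp
        qed
      qed
      show ?thesis using xC x0 ax by blast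
    qed
    then show "a \<in> slicing_set vs" using a0 unfolding slicing_set_def C_def by blast
  qed
  show ?thesis using L R unfolding slicing_set_def by blast
qed

end
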